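(* Let $\mathcal{T}$ be a binary phylogenetic $X$-tree with $n=|X|\ge 4$ leaves. Then there exist $k\ge n/4$ pairs of leaves $\{a_1,b_1\},\dots,\{a_k,b_k\}$, pairwise disjoint as sets, such that (i) for every $i$, the distance $d_{\mathcal{T}}(a_i,b_i)$ is $2$ or $3$; and (ii) for $i\ne j$, the $a_i$–$b_i$ path and the $a_j$–$b_j$ path in $\mathcal{T}$ are edge-disjoint.
   Context: A phylogenetic $X$-tree is a finite tree whose leaves (degree-1 vertices) are bijectively labelled by the elements of $X$; it is binary if every vertex has degree 1 or 3. $d_{\mathcal{T}}(u,v)$ denotes the number of edges on the unique path between vertices $u,v$ of $\mathcal{T}$. *)

theory Defs
  imports Complex_Main
begin

definition graph :: "'v set \<Rightarrow> 'v set set \<Rightarrow> bool" where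
  "graph V E \<longleftrightarrow> finite V \<and> (\<forall>e\<in>E. \<exists>u v. u \<in> V \<and> v \<in> V \<and> u \<noteq> v \<and> e = {u, v})"

definition is_walk :: "'v set set \<Rightarrow> 'v list \<Rightarrow> 'v \<Rightarrow> 'v \<Rightarrow> bool" where
  "is_walk E p u v \<longleftrightarrow> p \<noteq> [] \<and> hd p = u \<and> last p = v \<and>
     (\<forall>i. Suc i < length p \<longrightarrow> {p ! i, p ! Suc i} \<in> E)"

definition is_path :: "'v set set \<Rightarrow> 'v list \<Rightarrow> 'v \<Rightarrow> 'v \<Rightarrow> bool" where
  "is_path E p u v \<longleftrightarrow> is_walk E p u v \<and> distinct p"

definition walk_edges :: "'v list \<Rightarrow> 'v set set" where
  "walk_edges p = {{p ! i, p ! Suc i} | i. Suc i < length p}"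

definition is_tree :: "'v set \<Rightarrow> 'v set set \<Rightarrow> bool" where
  "is_tree V E \<longleftrightarrow> graph V E \<and> V \<noteq> {} \<and> (\<forall>u\<in>V. \<forall>v\<in>V. \<exists>!p. is_path E p u v)"

definition degree :: "'v set set \<Rightarrow> 'v \<Rightarrow> nat" where
  "degree E v = card {e\<in>E. v \<in> e}"

definition leaves :: "'v set \<Rightarrow> 'v set set \<Rightarrow> 'v set" where
  "leaves V E = {v\<in>V. degree E v = 1}"

definition binary_tree :: "'v set \<Rightarrow> 'v set set \<Rightarrow> bool" where
  "binary_tree V E \<longleftrightarrow> is_tree V E \<and> (\<forall>v\<in>V. degree E v = 1 \<or> degree E v = 3)"

definition binary_phylo_tree :: "'v set \<Rightarrow> 'v set set \<Rightarrow> 'x set \<Rightarrow> ('x \<Rightarrow> 'v) \<Rightarrow> bool" where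
  "binary_phylo_tree V E X lab \<longleftrightarrow> binary_tree V E \<and> bij_betw lab X (leaves V E)"

definition tree_dist :: "'v set set \<Rightarrow> 'v \<Rightarrow> 'v \<Rightarrow> nat" where
  "tree_dist E u v = (LEAST n. \<exists>p. is_walk E p u v \<and> length p = Suc n)"

definition path_edges :: "'v set set \<Rightarrow> 'v \<Rightarrow> 'v \<Rightarrow> 'v set set" where
  "path_edges E u v = walk_edges (THE p. is_path E p u v)"

end

theory Submission
  imports Defs
begin


lemma succ_nth: "(\<forall>i. Suc i < length p \<longrightarrow> P (p!i) (p!Suc i)) \<longleftrightarrow> successively P p"
proof (induction p rule: induct_list012)
  case (3 x y xs)
  have "(\<forall>i. Suc i < length (x#y#xs) \<longrightarrow> P ((x#y#xs)!i) ((x#y#xs)!Suc i)) \<longleftrightarrow>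
        P x y \<and> (\<forall>i. Suc i < length (y#xs) \<longrightarrow> P ((y#xs)!i) ((y#xs)!Suc i))"
    by (auto simp: nth_Cons split: nat.splits)
  then show ?case using 3 by simp
qed auto

lemma walk_succ: "is_walk E p u v \<longleftrightarrow> p \<noteq> [] \<and> hd p = u \<and> last p = v \<and> successively (\<lambda>x y. {x,y} \<in> E) p"
  unfolding is_walk_def using succ_nth[of p "\<lambda>x y. {x,y} \<in> E"] by auto

lemma we_img: "walk_edges p = (\<lambda>i. {p!i, p!Suc i}) ` {i. Suc i < length p}"
  unfolding walk_edges_def by auto
lemma we3: "walk_edges [a,b,c] = {{a,b},{b,c}}"
proof -
  have "{i. Suc i < length [a,b,c]} = {0,1}" by auto
  then show ?thesis unfolding we_img by simp
qed
lemma we4: "walk_edges [a,b,c,d] = {{a,b},{b,c},{c,d}}"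
proof -
  have "{i. Suc i < length [a,b,c,d]} = {0,1,2}" by auto
  then show ?thesis unfolding we_img by (simp add: numeral_2_eq_2)
qed

lemma path_snoc: "is_path E p r u \<Longrightarrow> {u,v} \<in> E \<Longrightarrow> v \<notin> set p \<Longrightarrow> is_path E (p@[v]) r v"
  unfolding is_path_def walk_succ by (auto simp: successively_append_iff)

lemma path_prefix: "is_path E (xs @ v # ys) r u \<Longrightarrow> is_path E (xs @ [v]) r v"
proof -
  assume a: "is_path E (xs @ v # ys) r u"
  have e: "xs @ v # ys = (xs @ [v]) @ ys" by simp
  show ?thesis using a unfolding is_path_def walk_succ e
    by (auto simp: successively_append_iff hd_append split: if_splits)
qed

lemma card_filter_sum: "finite A \<Longrightarrow> card {b\<in>A. P b} = (\<Sum>b\<in>A. if P b then 1 else 0)"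
proof -
  assume f: "finite A"
  have "{b\<in>A. P b} = A \<inter> Collect P" by auto
  then show ?thesis using f by (simp add: sum.If_cases)
qed

lemma dc: "finite A \<Longrightarrow> finite B \<Longrightarrow>
   (\<Sum>a\<in>A. card {b\<in>B. R a b}) = (\<Sum>b\<in>B. card {a\<in>A. R a b})"
  by (simp add: card_filter_sum sum.swap[of _ A B])

lemma matching:
  fixes N :: "'a \<Rightarrow> 'a set"
  assumes "finite S" and "\<forall>x\<in>S. card (N x \<inter> S) \<le> 2" and "\<forall>x. x \<notin> N x"
    and "\<forall>x y. y \<in> N x \<longleftrightarrow> x \<in> N y"
  shows "\<exists>M. (\<forall>(x,y)\<in>set M. x\<in>S \<and> y\<in>S \<and> y\<in>N x) \<and> distinct (concat (map (\<lambda>(x,y). [x,y]) M))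
     \<and> card (Sigma S (\<lambda>v. N v \<inter> S)) \<le> 8 * length M"
  using assms
proof (induction "card S" arbitrary: S rule: less_induct)
  case less
  show ?case
  proof (cases "Sigma S (\<lambda>v. N v \<inter> S) = {}")
    case True
    then show ?thesis by (intro exI[of _ "[]"]) simp
  next
    case False
    then obtain x y where xy: "x \<in> S" "y \<in> S" "y \<in> N x" by blast
    have xny: "x \<noteq> y" using xy less.prems(3) by blast
    define S' where "S' = S - {x,y}"
    have fS': "finite S'" using less.prems(1) S'_def by simp
    have "S' \<subset> S" unfolding S'_def using xy by auto
    then have lt: "card S' < card S" using less.prems(1) by (rule psubset_card_mono[rotated])
    have p2: "\<forall>v\<in>S'. card (N v \<inter> S') \<le> 2"
    proof
      fix v assume "v \<in> S'"
      then have "card (N v \<inter> S') \<le> card (N v \<inter> S)" using less.prems(1) S'_def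
        by (intro card_mono) auto
      then show "card (N v \<inter> S') \<le> 2" using less.prems(2) \<open>v \<in> S'\<close> S'_def by force
    qed
    obtain M where M: "\<forall>(a,b)\<in>set M. a\<in>S' \<and> b\<in>S' \<and> b\<in>N a"
      "distinct (concat (map (\<lambda>(x,y). [x,y]) M))"
      "card (Sigma S' (\<lambda>v. N v \<inter> S')) \<le> 8 * length M"
      using less.hyps[OF lt fS' p2 less.prems(3,4)] by blast
    let ?M = "(x,y) # M"
    have s1: "\<forall>(a,b)\<in>set ?M. a\<in>S \<and> b\<in>S \<and> b\<in>N a" using M(1) xy S'_def by auto
    have sub: "set (concat (map (\<lambda>(x,y). [x,y]) M)) \<subseteq> S'" using M(1) by auto
    have s2: "distinct (concat (map (\<lambda>(x,y). [x,y]) ?M))" using M(2) sub xny S'_def by auto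
    have incl: "Sigma S (\<lambda>v. N v \<inter> S) \<subseteq> Sigma S' (\<lambda>v. N v \<inter> S') \<union>
       (({x} \<times> (N x \<inter> S) \<union> {y} \<times> (N y \<inter> S)) \<union> ((N x \<inter> S) \<times> {x} \<union> (N y \<inter> S) \<times> {y}))"
      using less.prems(4) S'_def by auto
    have fin: "finite (N v \<inter> S)" for v using less.prems(1) by simp
    have c4: "card (({x} \<times> (N x \<inter> S) \<union> {y} \<times> (N y \<inter> S)) \<union> ((N x \<inter> S) \<times> {x} \<union> (N y \<inter> S) \<times> {y})) \<le> 8"
    proof -
      have a: "card ({x} \<times> (N x \<inter> S)) \<le> 2" "card ({y} \<times> (N y \<inter> S)) \<le> 2"
        "card ((N x \<inter> S) \<times> {x}) \<le> 2" "card ((N y \<inter> S) \<times> {y}) \<le> 2"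
        using less.prems(2) xy by (auto simp: card_cartesian_product)
      show ?thesis using a card_Un_le
        by (smt (verit) add_le_mono le_trans numeral_Bit0)
    qed
    have "card (Sigma S (\<lambda>v. N v \<inter> S)) \<le> card (Sigma S' (\<lambda>v. N v \<inter> S')) + 8"
    proof -
      have "card (Sigma S (\<lambda>v. N v \<inter> S)) \<le> card (Sigma S' (\<lambda>v. N v \<inter> S') \<union>
       (({x} \<times> (N x \<inter> S) \<union> {y} \<times> (N y \<inter> S)) \<union> ((N x \<inter> S) \<times> {x} \<union> (N y \<inter> S) \<times> {y})))"
        using incl fS' less.prems(1) fin by (intro card_mono) auto
      also have "\<dots> \<le> card (Sigma S' (\<lambda>v. N v \<inter> S')) + 8" using card_Un_le c4
        by (meson add_le_mono le_refl le_trans)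
      finally show ?thesis .
    qed
    then have s3: "card (Sigma S (\<lambda>v. N v \<inter> S)) \<le> 8 * length ?M" using M(3) by simp
    show ?thesis using s1 s2 s3 by blast
  qed
qed

locale btree =
  fixes V :: "'v set" and E :: "'v set set"
  assumes finV: "finite V"
  and edgeE: "\<And>e. e \<in> E \<Longrightarrow> \<exists>u v. u\<in>V \<and> v\<in>V \<and> u\<noteq>v \<and> e={u,v}"
  and uniq: "\<And>u v. u\<in>V \<Longrightarrow> v\<in>V \<Longrightarrow> \<exists>!p. is_path E p u v"
  and degs: "\<And>v. v\<in>V \<Longrightarrow> degree E v = 1 \<or> degree E v = 3"
begin

definition N where "N v = {u. {v,u} \<in> E}"

lemma edge_in: "{u,v} \<in> E \<Longrightarrow> u \<in> V \<and> v \<in> V \<and> u \<noteq> v"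
  using edgeE[of "{u,v}"] by (auto simp: doubleton_eq_iff)

lemma finE: "finite E"
proof -
  have "E \<subseteq> Pow V" using edgeE by blast
  then show ?thesis by (rule finite_subset) (simp add: finV)
qed

lemma N_sub: "N v \<subseteq> V" unfolding N_def using edge_in by blast
lemma N_irr: "v \<notin> N v" unfolding N_def using edge_in by blast
lemma N_fin: "finite (N v)" using N_sub finV by (rule finite_subset)
lemma N_sym: "u \<in> N v \<longleftrightarrow> v \<in> N u" unfolding N_def by (simp add: insert_commute)

lemma deg_N: "degree E v = card (N v)"
proof -
  have "inj_on (\<lambda>u. {v,u}) (N v)" by (auto simp: inj_on_def doubleton_eq_iff)
  moreover have "(\<lambda>u. {v,u}) ` N v = {e\<in>E. v \<in> e}"
  proof
    show "(\<lambda>u. {v,u}) ` N v \<subseteq> {e\<in>E. v \<in> e}" unfolding N_def by auto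
    show "{e\<in>E. v \<in> e} \<subseteq> (\<lambda>u. {v,u}) ` N v"
    proof
      fix e assume "e \<in> {e\<in>E. v \<in> e}"
      then obtain x y where "e \<in> E" "v \<in> e" "e = {x,y}" using edgeE by blast
      then show "e \<in> (\<lambda>u. {v,u}) ` N v" unfolding N_def
        by (cases "v = x") (auto simp: insert_commute)
    qed
  qed
  ultimately show ?thesis unfolding degree_def by (metis card_image)
qed

abbreviation "L \<equiv> leaves V E"

lemma L_iff: "v \<in> L \<longleftrightarrow> v \<in> V \<and> card (N v) = 1"
  unfolding leaves_def deg_N by auto

lemma I3: "v \<in> V \<Longrightarrow> v \<notin> L \<Longrightarrow> card (N v) = 3"
  using degs[of v] L_iff deg_N by auto

lemma leaf_nb: "a \<in> L \<Longrightarrow> {a,x} \<in> E \<Longrightarrow> {a,y} \<in> E \<Longrightarrow> x = y"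
proof -
  assume "a \<in> L" "{a,x} \<in> E" "{a,y} \<in> E"
  then have "card (N a) = 1" "x \<in> N a" "y \<in> N a" using L_iff N_def by auto
  then show "x = y" by (metis card_1_singletonE singletonD)
qed

lemma path_nth_edge: "is_path E q u v \<Longrightarrow> Suc i < length q \<Longrightarrow> {q!i, q!Suc i} \<in> E"
  unfolding is_path_def is_walk_def by blast

lemma star_cover:
  assumes p0: "p0 \<in> V" and nl: "N p0 \<subseteq> L"
  shows "V \<subseteq> insert p0 (N p0)"
proof
  fix v assume v: "v \<in> V"
  then obtain q where q: "is_path E q p0 v" using uniq p0 by blast
  have ne: "q \<noteq> []" and h: "q!0 = p0" and l: "last q = v" and d: "distinct q"
    using q unfolding is_path_def is_walk_def by (auto simp: hd_conv_nth)
  have "length q > 0" using ne by simp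
  then consider "length q = 1" | "length q = 2" | "length q \<ge> 3" by linarith
  then show "v \<in> insert p0 (N p0)"
  proof cases
    case 1 then show ?thesis using h l ne by (simp add: last_conv_nth)
  next
    case 2
    have "{q!0, q!1} \<in> E" using path_nth_edge[OF q, of 0] 2 by simp
    then show ?thesis using h l 2 ne by (simp add: last_conv_nth N_def)
  next
    case 3
    have e1: "{q!0, q!1} \<in> E" using path_nth_edge[OF q, of 0] 3 by simp
    have e2: "{q!1, q!2} \<in> E" using path_nth_edge[OF q, of 1] 3 by (simp add: numeral_2_eq_2)
    have "q!1 \<in> L" using e1 h nl N_def by auto
    then have "q!2 = q!0" using leaf_nb e1 e2 by (metis insert_commute)
    moreover have "(2::nat) < length q" using 3 by simp
    moreover have "q!2 \<noteq> q!0"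
    proof -
      have dd: "\<forall>i<length q. \<forall>j<length q. i \<noteq> j \<longrightarrow> q!i \<noteq> q!j" using d by (simp add: distinct_conv_nth)
      have "(0::nat) < length q" "(2::nat) < length q" using 3 by auto
      then show ?thesis using dd by (metis zero_neq_numeral)
    qed
    ultimately show ?thesis by blast
  qed
qed

lemma path_self: "r \<in> V \<Longrightarrow> is_path E [r] r r"
  unfolding is_path_def is_walk_def by simp

lemma edges_bound: assumes r: "r \<in> V" shows "card E + 1 \<le> card V"
proof -
  define P where "P v = (THE p. is_path E p r v)" for v
  have P: "v \<in> V \<Longrightarrow> is_path E (P v) r v" for v unfolding P_def using uniq[OF r] theI' by metis
  have Pu: "v \<in> V \<Longrightarrow> is_path E q r v \<Longrightarrow> q = P v" for v q
    using uniq[OF r] P by blast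
  define f where "f v = {last (butlast (P v)), v}" for v
  have C: "{u,v} \<in> f ` (V - {r})" if e: "{u,v} \<in> E" and nv: "v \<notin> set (P u)" for u v
  proof -
    have uv: "u \<in> V" "v \<in> V" using edge_in[OF e] by auto
    have "is_path E (P u @ [v]) r v" using path_snoc[OF P[OF uv(1)] e nv] .
    then have "P v = P u @ [v]" by (rule sym[OF Pu[OF uv(2)]])
    moreover have "last (P u) = u" "hd (P u) = r" "P u \<noteq> []" using P[OF uv(1)]
      unfolding is_path_def is_walk_def by auto
    ultimately have "f v = {u,v}" "v \<noteq> r" using nv unfolding f_def by auto
    then show ?thesis using uv by (metis Diff_iff image_eqI singletonD)
  qed
  have D: "u \<notin> set (P v)" if e: "{u,v} \<in> E" and vin: "v \<in> set (P u)" for u v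
  proof -
    have uv: "u \<in> V" "v \<in> V" "u \<noteq> v" using edge_in[OF e] by auto
    obtain xs ys where dec: "P u = xs @ v # ys" using vin by (meson split_list)
    have pu: "is_path E (xs @ v # ys) r u" using P[OF uv(1)] dec by simp
    then have "is_path E (xs @ [v]) r v" by (rule path_prefix)
    then have pv: "P v = xs @ [v]" by (rule sym[OF Pu[OF uv(2)]])
    have "last (xs @ v # ys) = u" "distinct (xs @ v # ys)" using pu unfolding is_path_def is_walk_def by auto
    moreover have "ys \<noteq> []"
    proof
      assume "ys = []"
      then show False using \<open>last (xs @ v # ys) = u\<close> uv(3) by simp
    qed
    ultimately have "ys \<noteq> []" "u \<in> set ys" by (auto simp: last_append)
    then show ?thesis using pv \<open>distinct (xs @ v # ys)\<close> uv(3) by auto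
  qed
  have "E \<subseteq> f ` (V - {r})"
  proof
    fix e assume e: "e \<in> E"
    then obtain u v where uv: "e = {u,v}" using edgeE by blast
    show "e \<in> f ` (V - {r})"
    proof (cases "v \<in> set (P u)")
      case False
      have "{u,v} \<in> E" using e uv by simp
      from C[OF this False] show ?thesis using uv by simp
    next
      case True
      have e1: "{u,v} \<in> E" using e uv by simp
      have e2: "{v,u} \<in> E" using e uv by (simp add: insert_commute)
      have "u \<notin> set (P v)" using D[OF e1 True] .
      from C[OF e2 this] show ?thesis using uv by (simp add: insert_commute)
    qed
  qed
  then have "card E \<le> card (f ` (V - {r}))" using finV by (intro card_mono) auto
  also have "\<dots> \<le> card (V - {r})" using finV by (intro card_image_le) simp
  also have "\<dots> = card V - 1" using r by simp
  finally have "card E \<le> card V - 1" .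
  moreover have "card V > 0" using r finV card_gt_0_iff by blast
  ultimately show ?thesis by linarith
qed

lemma handshake: "(\<Sum>v\<in>V. degree E v) = 2 * card E"
proof -
  have "(\<Sum>v\<in>V. degree E v) = (\<Sum>v\<in>V. card {e\<in>E. v \<in> e})" unfolding degree_def ..
  also have "\<dots> = (\<Sum>e\<in>E. card {v\<in>V. v \<in> e})" using dc[OF finV finE, of "\<lambda>v e. v \<in> e"] .
  also have "\<dots> = (\<Sum>e\<in>E. 2)"
  proof (rule sum.cong)
    fix e assume "e \<in> E"
    then obtain u v where "u\<in>V" "v\<in>V" "u\<noteq>v" "e={u,v}" using edgeE by blast
    then have "{v\<in>V. v \<in> e} = {u,v}" by auto
    then show "card {v\<in>V. v \<in> e} = 2" using \<open>u\<noteq>v\<close> by simp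
  qed simp
  finally show ?thesis by simp
qed

end



lemma dcm: "distinct (concat (map f Q)) \<Longrightarrow> i < length Q \<Longrightarrow> j < length Q \<Longrightarrow> i \<noteq> j
   \<Longrightarrow> set (f (Q!i)) \<inter> set (f (Q!j)) = {}"
proof (induction Q arbitrary: i j)
  case (Cons q Q)
  have sub: "k < length Q \<Longrightarrow> set (f (Q!k)) \<subseteq> set (concat (map f Q))" for k
    by (auto simp: set_concat) (metis nth_mem)
  show ?case
  proof (cases i)
    case 0
    then obtain k where "j = Suc k" "k < length Q" using Cons.prems by (cases j) auto
    then show ?thesis using 0 Cons.prems(1) sub[of k] by auto
  next
    case (Suc i')
    show ?thesis
    proof (cases j)
      case 0
      then show ?thesis using Suc Cons.prems sub[of i'] by auto
    next
      case (Suc j')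
      then show ?thesis using \<open>i = Suc i'\<close> Cons.prems Cons.IH[of i' j'] by auto
    qed
  qed
qed simp

locale btree4 = btree +
  assumes L4: "4 \<le> card L"
begin

lemma L_sub: "L \<subseteq> V" unfolding leaves_def by auto
lemma finL: "finite L" using L_sub finV rev_finite_subset by blast
lemma Vne: "V \<noteq> {}" using L4 L_sub by auto

lemma par_int: assumes a: "a \<in> L" shows "N a \<inter> L = {}"
proof (rule ccontr)
  assume "N a \<inter> L \<noteq> {}"
  then obtain x where x: "x \<in> N a" "x \<in> L" by blast
  have "card (N a) = 1" using a L_iff by auto
  then have Na: "N a = {x}" using x by (metis card_1_singletonE singletonD)
  have "V \<subseteq> {a, x}" using star_cover[of a] a L_sub Na x by auto
  then have "card L \<le> card {a,x}" using L_sub by (intro card_mono) auto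
  also have "\<dots> \<le> 2" by (simp add: card_insert_le_m1)
  finally show False using L4 by simp
qed

lemma w_le2: assumes p: "p \<in> V" "p \<notin> L" shows "card (N p \<inter> L) \<le> 2"
proof (rule ccontr)
  assume "\<not> ?thesis"
  then have ge: "card (N p \<inter> L) \<ge> 3" by simp
  have c3: "card (N p) = 3" using I3 p by simp
  have "N p \<inter> L = N p" using card_subset_eq[OF N_fin, of "N p \<inter> L"] ge c3
    by (metis Int_lower1 card_mono N_fin le_antisym)
  then have "N p \<subseteq> L" by auto
  then have "V \<subseteq> insert p (N p)" using star_cover p by auto
  then have "L \<subseteq> N p" using L_sub p by auto
  then have "card L \<le> 3" using c3 card_mono N_fin by metis
  then show False using L4 by simp
qed

definition "I = V - L"
definition "w p = card (N p \<inter> L)"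
definition "C = {p\<in>I. w p = 2}"
definition "S = {p\<in>I. w p = 1}"
definition "B0 = {p\<in>I. w p = 0}"

lemma finI: "finite I" unfolding I_def using finV by simp
lemma I_part: "I = C \<union> S \<union> B0"
  using w_le2 unfolding I_def C_def S_def B0_def w_def by force
lemma fins: "finite C" "finite S" "finite B0" using finI unfolding C_def S_def B0_def by auto

lemma NI: "p \<in> I \<Longrightarrow> card (N p \<inter> I) = 3 - w p"
proof -
  assume p: "p \<in> I"
  have "N p \<inter> I = N p - (N p \<inter> L)" using N_sub unfolding I_def by auto
  then have "card (N p \<inter> I) = card (N p) - card (N p \<inter> L)" using N_fin
    by (simp add: card_Diff_subset)
  then show ?thesis using I3 p unfolding I_def w_def by auto
qed

lemma count:
  "card L = 2 * card C + card S \<and> 2 * card S + 6 \<le> 4 * card C + card (Sigma S (\<lambda>v. N v \<inter> S))"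
proof -
  have F1: "card L = (\<Sum>p\<in>I. w p)"
  proof -
    have "(\<Sum>a\<in>L. card {b\<in>I. b \<in> N a}) = (\<Sum>b\<in>I. card {a\<in>L. b \<in> N a})"
      using dc[OF finL finI] .
    moreover have "(\<Sum>a\<in>L. card {b\<in>I. b \<in> N a}) = (\<Sum>a\<in>L. 1)"
    proof (rule sum.cong)
      fix a assume a: "a \<in> L"
      have "{b\<in>I. b \<in> N a} = N a" using par_int[OF a] N_sub unfolding I_def by auto
      then show "card {b\<in>I. b \<in> N a} = 1" using a L_iff by simp
    qed simp
    moreover have "{a\<in>L. b \<in> N a} = N b \<inter> L" for b using N_sym by auto
    ultimately show ?thesis unfolding w_def by simp
  qed
  have disj: "C \<inter> S = {}" "C \<inter> B0 = {}" "S \<inter> B0 = {}" unfolding C_def S_def B0_def by auto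
  have F2: "(\<Sum>p\<in>I. w p) = 2 * card C + card S"
  proof -
    have "(\<Sum>p\<in>I. w p) = (\<Sum>p\<in>C. w p) + (\<Sum>p\<in>S. w p) + (\<Sum>p\<in>B0. w p)"
      unfolding I_part using fins disj by (simp add: sum.union_disjoint Int_Un_distrib2)
    moreover have "(\<Sum>p\<in>C. w p) = 2 * card C" unfolding C_def by simp
    moreover have "(\<Sum>p\<in>S. w p) = card S" unfolding S_def by simp
    moreover have "(\<Sum>p\<in>B0. w p) = 0" unfolding B0_def by simp
    ultimately show ?thesis by simp
  qed
  have cardI: "card I = card C + card S + card B0"
    unfolding I_part using fins disj by (simp add: card_Un_disjoint Int_Un_distrib2)
  have F3: "card I + 2 \<le> card L"
  proof -
    have VLI: "V = L \<union> I" "L \<inter> I = {}" using L_sub unfolding I_def by auto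
    have "(\<Sum>v\<in>V. degree E v) = (\<Sum>v\<in>L \<union> I. degree E v)" by (rule arg_cong[OF VLI(1)])
    also have "\<dots> = (\<Sum>v\<in>L. degree E v) + (\<Sum>v\<in>I. degree E v)"
      using finL finI VLI(2) by (rule sum.union_disjoint)
    also have "(\<Sum>v\<in>L. degree E v) = card L" using L_iff deg_N by simp
    also have "(\<Sum>v\<in>I. degree E v) = 3 * card I" using I3 deg_N unfolding I_def by simp
    finally have "card L + 3 * card I = 2 * card E" using handshake by simp
    moreover obtain r where "r \<in> V" using Vne by blast
    then have "card E + 1 \<le> card V" by (rule edges_bound)
    moreover have "card V = card L + card I"
    proof -
      have "card V = card (L \<union> I)" by (rule arg_cong[OF VLI(1)])
      also have "\<dots> = card L + card I" using finL finI VLI(2) by (rule card_Un_disjoint)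
      finally show ?thesis .
    qed
    ultimately show ?thesis by linarith
  qed
  have F4: "(\<Sum>v\<in>S. card (N v \<inter> S)) + (\<Sum>v\<in>S. card (N v \<inter> (C \<union> B0))) = 2 * card S"
  proof -
    have "card (N v \<inter> S) + card (N v \<inter> (C \<union> B0)) = 2" if v: "v \<in> S" for v
    proof -
      have "N v \<inter> I = (N v \<inter> S) \<union> (N v \<inter> (C \<union> B0))" "(N v \<inter> S) \<inter> (N v \<inter> (C \<union> B0)) = {}"
        using I_part disj by auto
      then have "card (N v \<inter> I) = card (N v \<inter> S) + card (N v \<inter> (C \<union> B0))"
        using N_fin by (simp add: card_Un_disjoint)
      moreover have "card (N v \<inter> I) = 2" using NI v unfolding S_def by auto
      ultimately show ?thesis by simp
    qed
    then have "(\<Sum>v\<in>S. card (N v \<inter> S) + card (N v \<inter> (C \<union> B0))) = (\<Sum>v\<in>S. 2)" by simp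
    then show ?thesis by (simp add: sum.distrib)
  qed
  have F5: "(\<Sum>v\<in>S. card (N v \<inter> (C \<union> B0))) \<le> card C + 3 * card B0"
  proof -
    have fCB: "finite (C \<union> B0)" using fins by simp
    have "(\<Sum>v\<in>S. card {x\<in>C \<union> B0. x \<in> N v}) = (\<Sum>x\<in>C \<union> B0. card {v\<in>S. x \<in> N v})"
      by (rule dc[OF fins(2) fCB])
    moreover have "{x\<in>C \<union> B0. x \<in> N v} = N v \<inter> (C \<union> B0)" for v by auto
    moreover have "{v\<in>S. x \<in> N v} = N x \<inter> S" for x using N_sym by auto
    ultimately have eq: "(\<Sum>v\<in>S. card (N v \<inter> (C \<union> B0))) = (\<Sum>x\<in>C \<union> B0. card (N x \<inter> S))" by simp
    have le: "card (N x \<inter> S) \<le> 3 - w x" if "x \<in> I" for x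
    proof -
      have "card (N x \<inter> S) \<le> card (N x \<inter> I)" using N_fin I_part by (intro card_mono) auto
      then show ?thesis using NI that by simp
    qed
    have "(\<Sum>x\<in>C \<union> B0. card (N x \<inter> S)) = (\<Sum>x\<in>C. card (N x \<inter> S)) + (\<Sum>x\<in>B0. card (N x \<inter> S))"
      using fins disj by (simp add: sum.union_disjoint)
    also have "\<dots> \<le> (\<Sum>x\<in>C. 1) + (\<Sum>x\<in>B0. 3)"
      apply (intro add_mono sum_mono)
      using le unfolding C_def B0_def by force+
    finally show ?thesis using eq by simp
  qed
  have F6: "card (Sigma S (\<lambda>v. N v \<inter> S)) = (\<Sum>v\<in>S. card (N v \<inter> S))"
    using fins N_fin by (simp add: card_SigmaI)
  show ?thesis using F1 F2 F3 F4 F5 F6 cardI by linarith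
qed

lemma LI: "a \<in> L \<Longrightarrow> a \<notin> I" unfolding I_def by simp
lemma IV: "p \<in> I \<Longrightarrow> p \<in> V" unfolding I_def by simp

lemma leaf_not_adj: "a \<in> L \<Longrightarrow> b \<in> L \<Longrightarrow> {a,b} \<notin> E"
  using par_int[of a] unfolding N_def by blast

lemma dist2: assumes "a \<in> L" "b \<in> L" "a \<noteq> b" "{a,p} \<in> E" "{p,b} \<in> E"
  shows "tree_dist E a b = 2"
  unfolding tree_dist_def
proof (rule Least_equality)
  have "is_walk E [a,p,b] a b" using assms by (simp add: walk_succ)
  then show "\<exists>q. is_walk E q a b \<and> length q = Suc 2" by force
next
  fix n assume "\<exists>q. is_walk E q a b \<and> length q = Suc n"
  then obtain q where q: "is_walk E q a b" "length q = Suc n" by blast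
  show "2 \<le> n"
  proof (rule ccontr)
    assume "\<not> 2 \<le> n" then have "n = 0 \<or> n = 1" by auto
    then show False
    proof
      assume "n = 0" then obtain x where "q = [x]" using q(2) by (auto simp: length_Suc_conv)
      then show False using q(1) assms(3) by (auto simp: walk_succ)
    next
      assume "n = 1" then obtain x y where "q = [x,y]" using q(2) by (auto simp: length_Suc_conv)
      then have "{a,b} \<in> E" using q(1) by (auto simp: walk_succ)
      then show False using leaf_not_adj assms(1,2) by blast
    qed
  qed
qed

lemma dist3: assumes "a \<in> L" "b \<in> L" "p \<noteq> p'" "{a,p} \<in> E" "{p,p'} \<in> E" "{p',b} \<in> E"
  shows "tree_dist E a b = 3"
  unfolding tree_dist_def
proof (rule Least_equality)
  have "is_walk E [a,p,p',b] a b" using assms by (simp add: walk_succ)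
  then show "\<exists>q. is_walk E q a b \<and> length q = Suc 3" by force
next
  have ab: "a \<noteq> b"
  proof
    assume "a = b"
    then have "{a,p'} \<in> E" using assms(6) by (simp add: insert_commute)
    then show False using leaf_nb[OF assms(1) assms(4)] assms(3) by blast
  qed
  fix n assume "\<exists>q. is_walk E q a b \<and> length q = Suc n"
  then obtain q where q: "is_walk E q a b" "length q = Suc n" by blast
  show "3 \<le> n"
  proof (rule ccontr)
    assume "\<not> 3 \<le> n" then have "n = 0 \<or> n = 1 \<or> n = 2" by auto
    then show False
    proof (elim disjE)
      assume "n = 0" then obtain x where "q = [x]" using q(2) by (auto simp: length_Suc_conv)
      then show False using q(1) ab by (auto simp: walk_succ)
    next
      assume "n = 1" then obtain x y where "q = [x,y]" using q(2) by (auto simp: length_Suc_conv)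
      then have "{a,b} \<in> E" using q(1) by (auto simp: walk_succ)
      then show False using leaf_not_adj assms(1,2) by blast
    next
      assume "n = 2" then obtain x y z where "q = [x,y,z]" using q(2)
        by (auto simp: length_Suc_conv numeral_2_eq_2)
      then have e: "{a,y} \<in> E" "{y,b} \<in> E" using q(1) by (auto simp: walk_succ)
      have "y = p" using leaf_nb[OF assms(1) e(1) assms(4)] .
      moreover have "y = p'" using leaf_nb[OF assms(2), of y p'] e(2) assms(6) by (simp add: insert_commute)
      ultimately show False using assms(3) by simp
    qed
  qed
qed

lemma pe: assumes "is_path E q a b" "a \<in> V" "b \<in> V" shows "path_edges E a b = walk_edges q"
  unfolding path_edges_def using the1_equality[OF uniq[OF assms(2,3)] assms(1)] by simp

definition good where
  "good q \<longleftrightarrow> (\<exists>a p b. q = [a,p,b] \<and> a\<in>L \<and> b\<in>L \<and> a\<noteq>b \<and> p\<in>I \<and> {a,p}\<in>E \<and> {p,b}\<in>E) \<or>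
     (\<exists>a p p' b. q = [a,p,p',b] \<and> a\<in>L \<and> b\<in>L \<and> p\<in>I \<and> p'\<in>I \<and> p\<noteq>p' \<and> {a,p}\<in>E \<and> {p,p'}\<in>E \<and> {p',b}\<in>E)"

definition mid where "mid q = set (butlast (tl q))"

lemma good_props:
  assumes "good q"
  shows "hd q \<in> L \<and> last q \<in> L \<and> hd q \<noteq> last q \<and> tree_dist E (hd q) (last q) \<in> {2,3} \<and>
    path_edges E (hd q) (last q) = walk_edges q \<and> set q \<subseteq> L \<union> mid q \<and> mid q \<subseteq> I \<and>
    (\<exists>m\<in>mid q. {hd q, m} \<in> E) \<and> (\<exists>m\<in>mid q. {last q, m} \<in> E) \<and>
    (\<forall>e\<in>walk_edges q. \<exists>x m. e = {x,m} \<and> m \<in> mid q \<and> x \<in> set q)"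
  using assms unfolding good_def
proof (elim disjE exE conjE)
  fix a p b assume h: "q = [a,p,b]" "a\<in>L" "b\<in>L" "a\<noteq>b" "p\<in>I" "{a,p}\<in>E" "{p,b}\<in>E"
  have "a \<noteq> p" "p \<noteq> b" using h LI by auto
  then have "is_path E [a,p,b] a b" using h unfolding is_path_def by (simp add: walk_succ)
  then have "path_edges E a b = walk_edges [a,p,b]" using pe h L_sub by blast
  moreover have "tree_dist E a b = 2" using dist2 h by blast
  ultimately show ?thesis using h by (auto simp: mid_def we3 insert_commute)
next
  fix a p p' b assume h: "q = [a,p,p',b]" "a\<in>L" "b\<in>L" "p\<in>I" "p'\<in>I" "p\<noteq>p'" "{a,p}\<in>E" "{p,p'}\<in>E" "{p',b}\<in>E"
  have ab: "a \<noteq> b"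
  proof
    assume "a = b"
    then have "{a,p'} \<in> E" using h(9) by (simp add: insert_commute)
    then show False using leaf_nb[OF h(2) h(7)] h(6) by blast
  qed
  have "a \<noteq> p" "p \<noteq> b" "a \<noteq> p'" "p' \<noteq> b" using h LI by auto
  then have "is_path E [a,p,p',b] a b" using h ab unfolding is_path_def by (simp add: walk_succ)
  then have "path_edges E a b = walk_edges [a,p,p',b]" using pe h L_sub by blast
  moreover have "tree_dist E a b = 3" using dist3 h by blast
  ultimately show ?thesis using h ab by (auto simp: mid_def we4 insert_commute)
qed

lemma gp_hd: assumes "good q" shows "hd q \<in> L" using good_props[OF assms] by (elim conjE) assumption
lemma gp_last: assumes "good q" shows "last q \<in> L" using good_props[OF assms] by (elim conjE) assumption
lemma gp_set: assumes "good q" shows "set q \<subseteq> L \<union> mid q" using good_props[OF assms] by (elim conjE) assumption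
lemma gp_mid: assumes "good q" shows "mid q \<subseteq> I" using good_props[OF assms] by (elim conjE) assumption
lemma gp_nbh: assumes "good q" shows "\<exists>m\<in>mid q. {hd q, m} \<in> E" using good_props[OF assms] by (elim conjE) assumption
lemma gp_nbl: assumes "good q" shows "\<exists>m\<in>mid q. {last q, m} \<in> E" using good_props[OF assms] by (elim conjE) assumption
lemma gp_edges: assumes "good q" shows "\<forall>e\<in>walk_edges q. \<exists>x m. e = {x,m} \<and> m \<in> mid q \<and> x \<in> set q"
  using good_props[OF assms] by (elim conjE) assumption

lemma good_disj:
  assumes g: "good q1" "good q2" and d: "mid q1 \<inter> mid q2 = {}"
  shows "{hd q1, last q1} \<inter> {hd q2, last q2} = {}" "walk_edges q1 \<inter> walk_edges q2 = {}"
proof -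
  have nb: "\<exists>m\<in>mid q. {x, m} \<in> E" if "good q" "x \<in> {hd q, last q}" for q x
    using gp_nbh[OF that(1)] gp_nbl[OF that(1)] that(2) by auto
  show "{hd q1, last q1} \<inter> {hd q2, last q2} = {}"
  proof (rule ccontr)
    assume "\<not> ?thesis"
    then obtain x where x: "x \<in> {hd q1, last q1}" "x \<in> {hd q2, last q2}" by blast
    then have xL: "x \<in> L" using gp_hd[OF g(1)] gp_last[OF g(1)] by auto
    obtain m1 where "m1 \<in> mid q1" "{x,m1} \<in> E" using nb[OF g(1) x(1)] by blast
    moreover obtain m2 where "m2 \<in> mid q2" "{x,m2} \<in> E" using nb[OF g(2) x(2)] by blast
    ultimately show False using leaf_nb[OF xL] d by blast
  qed
  show "walk_edges q1 \<inter> walk_edges q2 = {}"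
  proof (rule ccontr)
    assume "\<not> ?thesis"
    then obtain e where e: "e \<in> walk_edges q1" "e \<in> walk_edges q2" by blast
    from bspec[OF gp_edges[OF g(1)] e(1)] obtain x m where xm: "e = {x,m}" "m \<in> mid q1" "x \<in> set q1" by blast
    from bspec[OF gp_edges[OF g(2)] e(2)] obtain y m' where ym: "e = {y,m'}" "m' \<in> mid q2" "y \<in> set q2" by blast
    have "m \<noteq> m'" using xm ym d by blast
    then have "m = y" using xm(1) ym(1) by (auto simp: doubleton_eq_iff)
    have "m \<in> I" using xm(2) gp_mid[OF g(1)] by blast
    moreover have "m \<in> L \<union> mid q2" using gp_set[OF g(2)] ym(3) \<open>m = y\<close> by blast
    ultimately have "m \<in> mid q2" using LI by blast
    then show False using xm(2) d by blast
  qed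
qed

lemma main_paths: "\<exists>Q. real (card L) / 4 \<le> real (length Q) \<and> (\<forall>q\<in>set Q. good q) \<and>
   (\<forall>i<length Q. \<forall>j<length Q. i \<noteq> j \<longrightarrow> mid (Q!i) \<inter> mid (Q!j) = {})"
proof -
  have cnt: "card L = 2 * card C + card S" "2 * card S + 6 \<le> 4 * card C + card (Sigma S (\<lambda>v. N v \<inter> S))"
    using count by auto
  have S2: "\<forall>x\<in>S. card (N x \<inter> S) \<le> 2"
  proof
    fix x assume x: "x \<in> S"
    have "card (N x \<inter> S) \<le> card (N x \<inter> I)" using N_fin I_part by (intro card_mono) auto
    then show "card (N x \<inter> S) \<le> 2" using NI x unfolding S_def by auto
  qed
  obtain M where M: "\<forall>(x,y)\<in>set M. x\<in>S \<and> y\<in>S \<and> y\<in>N x"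
     "distinct (concat (map (\<lambda>(x,y). [x,y]) M))"
     "card (Sigma S (\<lambda>v. N v \<inter> S)) \<le> 8 * length M"
    using matching[OF fins(2) S2] N_irr N_sym by blast
  obtain cs where cs: "set cs = C" "distinct cs" using finite_distinct_list[OF fins(1)] by blast
  define cl where "cl p = (SOME ab. fst ab \<noteq> snd ab \<and> N p \<inter> L = {fst ab, snd ab})" for p
  have cl: "fst (cl p) \<noteq> snd (cl p) \<and> N p \<inter> L = {fst (cl p), snd (cl p)}" if "p \<in> C" for p
  proof -
    have "card (N p \<inter> L) = 2" using that unfolding C_def w_def by simp
    then obtain x y where "N p \<inter> L = {x,y}" "x \<noteq> y" by (auto simp: card_2_iff)
    then have "\<exists>ab. fst ab \<noteq> snd ab \<and> N p \<inter> L = {fst ab, snd ab}" by (intro exI[of _ "(x,y)"]) simp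
    then show ?thesis unfolding cl_def by (rule someI_ex)
  qed
  define lf where "lf p = the_elem (N p \<inter> L)" for p
  have lf: "N p \<inter> L = {lf p}" if "p \<in> S" for p
  proof -
    have "card (N p \<inter> L) = 1" using that unfolding S_def w_def by simp
    then obtain x where "N p \<inter> L = {x}" by (auto simp: card_1_singleton_iff)
    then show ?thesis unfolding lf_def by simp
  qed
  define cp where "cp p = [fst (cl p), p, snd (cl p)]" for p
  define mp where "mp pq = [lf (fst pq), fst pq, snd pq, lf (snd pq)]" for pq
  define Q where "Q = map cp cs @ map mp M"
  have good: "\<forall>q\<in>set Q. good q"
  proof
    fix q assume "q \<in> set Q"
    then consider p where "p \<in> C" "q = cp p" | pq where "pq \<in> set M" "q = mp pq"
      unfolding Q_def using cs by auto
    then show "good q"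
    proof cases
      case 1
      have c: "fst (cl p) \<noteq> snd (cl p)" "N p \<inter> L = {fst (cl p), snd (cl p)}" using cl[OF 1(1)] by auto
      have "p \<in> I" using 1(1) unfolding C_def by simp
      moreover have "fst (cl p) \<in> L" "snd (cl p) \<in> L" "{fst (cl p), p} \<in> E" "{p, snd (cl p)} \<in> E"
        using c(2) unfolding N_def by (auto simp: insert_commute)
      ultimately show ?thesis unfolding good_def 1(2) cp_def using c(1) by blast
    next
      case 2
      obtain p p' where pq: "pq = (p,p')" by (cases pq)
      have h: "p \<in> S" "p' \<in> S" "p' \<in> N p" using M(1) 2(1) pq by auto
      have "p \<noteq> p'" using h(3) N_irr by blast
      moreover have "p \<in> I" "p' \<in> I" using h unfolding S_def by auto
      moreover have "lf p \<in> L" "lf p' \<in> L" "{lf p, p} \<in> E" "{p,p'} \<in> E" "{p', lf p'} \<in> E"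
        using lf[OF h(1)] lf[OF h(2)] h(3) unfolding N_def by (auto simp: insert_commute)
      ultimately show ?thesis unfolding good_def 2(2) mp_def pq by auto
    qed
  qed
  have cc: "concat (map (\<lambda>q. butlast (tl q)) Q) = cs @ concat (map (\<lambda>(x,y). [x,y]) M)"
  proof -
    have "concat (map (\<lambda>q. butlast (tl q)) (map cp cs)) = cs" unfolding cp_def by (induction cs) auto
    moreover have "concat (map (\<lambda>q. butlast (tl q)) (map mp M)) = concat (map (\<lambda>(x,y). [x,y]) M)"
      unfolding mp_def by (induction M) auto
    ultimately show ?thesis unfolding Q_def by simp
  qed
  have "set (concat (map (\<lambda>(x,y). [x,y]) M)) \<subseteq> S" using M(1) by auto
  moreover have "C \<inter> S = {}" unfolding C_def S_def by auto
  ultimately have "distinct (concat (map (\<lambda>q. butlast (tl q)) Q))" unfolding cc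
    using cs M(2) by auto
  then have disj: "\<forall>i<length Q. \<forall>j<length Q. i \<noteq> j \<longrightarrow> mid (Q!i) \<inter> mid (Q!j) = {}"
    unfolding mid_def using dcm by blast
  have "length Q = card C + length M" unfolding Q_def using cs distinct_card by fastforce
  then have "real (card L) / 4 \<le> real (length Q)" using cnt M(3) by simp
  then show ?thesis using good disj by blast
qed

end



theorem lemma3p2:
  fixes V :: "'v set" and E :: "'v set set" and X :: "'x set" and lab :: "'x \<Rightarrow> 'v"
  assumes "binary_phylo_tree V E X lab"
    and "finite X" and "card X \<ge> 4"
  shows "\<exists>ps :: ('x \<times> 'x) list.
           real (length ps) \<ge> real (card X) / 4 \<and>
           (\<forall>i < length ps. fst (ps ! i) \<in> X \<and> snd (ps ! i) \<in> X \<and> fst (ps ! i) \<noteq> snd (ps ! i)) \<and>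
           (\<forall>i < length ps. \<forall>j < length ps. i \<noteq> j \<longrightarrow>
               {fst (ps ! i), snd (ps ! i)} \<inter> {fst (ps ! j), snd (ps ! j)} = {}) \<and>
           (\<forall>i < length ps. tree_dist E (lab (fst (ps ! i))) (lab (snd (ps ! i))) \<in> {2, 3}) \<and>
           (\<forall>i < length ps. \<forall>j < length ps. i \<noteq> j \<longrightarrow>
               path_edges E (lab (fst (ps ! i))) (lab (snd (ps ! i))) \<inter>
               path_edges E (lab (fst (ps ! j))) (lab (snd (ps ! j))) = {})"
proof -
  have bt: "binary_tree V E" and bij: "bij_betw lab X (leaves V E)"
    using assms(1) unfolding binary_phylo_tree_def by auto
  have tr: "is_tree V E" and dg: "\<forall>v\<in>V. degree E v = 1 \<or> degree E v = 3"
    using bt unfolding binary_tree_def by auto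
  have gr: "graph V E" and un: "\<forall>u\<in>V. \<forall>v\<in>V. \<exists>!p. is_path E p u v"
    using tr unfolding is_tree_def by auto
  have cardL: "card (leaves V E) = card X" using bij_betw_same_card[OF bij] by simp
  interpret btree4 V E
    apply unfold_locales
    using gr un dg cardL assms(3) unfolding graph_def by auto
  obtain Q where Q: "real (card L) / 4 \<le> real (length Q)" "\<forall>q\<in>set Q. good q"
    "\<forall>i<length Q. \<forall>j<length Q. i \<noteq> j \<longrightarrow> mid (Q!i) \<inter> mid (Q!j) = {}"
    using main_paths by blast
  have LX: "lab ` X = L" using bij by (simp add: bij_betw_def)
  define g where "g v = inv_into X lab v" for v
  have gX: "v \<in> L \<Longrightarrow> g v \<in> X" for v unfolding g_def using LX inv_into_into by metis
  have lg: "v \<in> L \<Longrightarrow> lab (g v) = v" for v unfolding g_def using LX f_inv_into_f by metis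
  define ps where "ps = map (\<lambda>q. (g (hd q), g (last q))) Q"
  have len: "length ps = length Q" unfolding ps_def by simp
  have psi: "fst (ps!i) = g (hd (Q!i))" "snd (ps!i) = g (last (Q!i))" if "i < length Q" for i
    using that unfolding ps_def by auto
  have gi: "good (Q!i)" if "i < length Q" for i using Q(2) that by simp
  show ?thesis
  proof (intro exI[of _ ps] conjI allI impI)
    show "real (card X) / 4 \<le> real (length ps)" using Q(1) cardL len by simp
  next
    fix i assume i: "i < length ps"
    then have i': "i < length Q" using len by simp
    note g = gi[OF i']
    have h: "hd (Q!i) \<in> L" "last (Q!i) \<in> L" "hd (Q!i) \<noteq> last (Q!i)"
      "tree_dist E (hd (Q!i)) (last (Q!i)) \<in> {2,3}"
      using good_props[OF g] by auto
    show "fst (ps ! i) \<in> X" using psi[OF i'] gX h by simp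
    show "snd (ps ! i) \<in> X" using psi[OF i'] gX h by simp
    show "fst (ps ! i) \<noteq> snd (ps ! i)" using psi[OF i'] lg h by metis
    show "tree_dist E (lab (fst (ps ! i))) (lab (snd (ps ! i))) \<in> {2, 3}"
      using psi[OF i'] lg h by simp
  next
    fix i j assume ij: "i < length ps" "j < length ps" "i \<noteq> j"
    then have ij': "i < length Q" "j < length Q" using len by auto
    note gi' = gi[OF ij'(1)] and gj' = gi[OF ij'(2)]
    have d: "mid (Q!i) \<inter> mid (Q!j) = {}" using Q(3) ij' ij(3) by blast
    note D = good_disj[OF gi' gj' d]
    have hi: "hd (Q!i) \<in> L" "last (Q!i) \<in> L" using good_props[OF gi'] by auto
    have hj: "hd (Q!j) \<in> L" "last (Q!j) \<in> L" using good_props[OF gj'] by auto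
    have pei: "path_edges E (hd (Q!i)) (last (Q!i)) = walk_edges (Q!i)" using good_props[OF gi'] by auto
    have pej: "path_edges E (hd (Q!j)) (last (Q!j)) = walk_edges (Q!j)" using good_props[OF gj'] by auto
    show "{fst (ps ! i), snd (ps ! i)} \<inter> {fst (ps ! j), snd (ps ! j)} = {}"
    proof (rule ccontr)
      assume "\<not> ?thesis"
      then obtain x where "x \<in> {g (hd (Q!i)), g (last (Q!i))}" "x \<in> {g (hd (Q!j)), g (last (Q!j))}"
        using psi ij' by auto
      then have "lab x \<in> {hd (Q!i), last (Q!i)}" "lab x \<in> {hd (Q!j), last (Q!j)}"
        using lg hi hj by auto
      then show False using D(1) by blast
    qed
    show "path_edges E (lab (fst (ps ! i))) (lab (snd (ps ! i))) \<inter>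
          path_edges E (lab (fst (ps ! j))) (lab (snd (ps ! j))) = {}"
      using psi[OF ij'(1)] psi[OF ij'(2)] lg hi hj pei pej D(2) by simp
  qed
qed

end
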